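(* Let $s,r,R$ be positive integers with $s,r\ge 2$. If there is a non-trivial $R$-perfect code in $\mathbb F_q^{s\times r}$ with respect to the NRT metric, then $(R+1)(r+1)\le sr$.
   Context: $q$ is a prime power, $\mathbb F_q^{s\times r}$ the set of $s\times r$ matrices over $\mathbb F_q$ with rows in $\mathbb F_q^{1\times r}$. For a row $y=(y_1,\dots,y_r)$, the NRT weight is $w(y)=\max\{j: y_j\neq 0\}$ if $y\ne0$ and $w(0)=0$; for a matrix, $w(x)=\sum_i w(x_i)$. The NRT metric is $d(x,y)=w(x-y)$; $B(c,R)=\{x: d(x,c)\le R\}$. A code $C$ is $R$-perfect if the balls $B(c,R)$, $c\in C$, are pairwise disjoint and cover $\mathbb F_q^{s\times r}$; non-trivial means $|C|>1$ and $C\ne\mathbb F_q^{s\times r}$. *)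

theory Defs
  imports Main
begin

text \<open>Matrices in F_q^{s x r} are represented as functions  nat \<Rightarrow> nat \<Rightarrow> 'a  (row i, column j,
  0-based), vanishing outside {0..<s} x {0..<r}.\<close>

definition mat_space :: "nat \<Rightarrow> nat \<Rightarrow> (nat \<Rightarrow> nat \<Rightarrow> 'a::zero) set" where
  "mat_space s r = {x. \<forall>i j. (s \<le> i \<or> r \<le> j) \<longrightarrow> x i j = 0}"

definition row_weight :: "nat \<Rightarrow> (nat \<Rightarrow> 'a::zero) \<Rightarrow> nat" where
  "row_weight r y = Max (insert 0 {Suc j | j. j < r \<and> y j \<noteq> 0})"

definition nrt_weight :: "nat \<Rightarrow> nat \<Rightarrow> (nat \<Rightarrow> nat \<Rightarrow> 'a::zero) \<Rightarrow> nat" where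
  "nrt_weight s r x = (\<Sum>i<s. row_weight r (x i))"

definition nrt_dist :: "nat \<Rightarrow> nat \<Rightarrow> (nat \<Rightarrow> nat \<Rightarrow> 'a::ab_group_add) \<Rightarrow> (nat \<Rightarrow> nat \<Rightarrow> 'a) \<Rightarrow> nat" where
  "nrt_dist s r x y = nrt_weight s r (x - y)"

definition nrt_ball :: "nat \<Rightarrow> nat \<Rightarrow> (nat \<Rightarrow> nat \<Rightarrow> 'a::ab_group_add) \<Rightarrow> nat \<Rightarrow> (nat \<Rightarrow> nat \<Rightarrow> 'a) set" where
  "nrt_ball s r c R = {x \<in> mat_space s r. nrt_dist s r x c \<le> R}"

definition perfect_code :: "nat \<Rightarrow> nat \<Rightarrow> nat \<Rightarrow> (nat \<Rightarrow> nat \<Rightarrow> 'a::ab_group_add) set \<Rightarrow> bool" where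
  "perfect_code s r R C \<longleftrightarrow> C \<subseteq> mat_space s r
     \<and> (\<forall>c\<in>C. \<forall>c'\<in>C. c \<noteq> c' \<longrightarrow> nrt_ball s r c R \<inter> nrt_ball s r c' R = {})
     \<and> (\<Union>c\<in>C. nrt_ball s r c R) = mat_space s r"

definition nontrivial_code :: "nat \<Rightarrow> nat \<Rightarrow> (nat \<Rightarrow> nat \<Rightarrow> 'a::zero) set \<Rightarrow> bool" where
  "nontrivial_code s r C \<longleftrightarrow> card C > 1 \<and> C \<noteq> mat_space s r"

end

theory Submission
  imports Defs
begin
lemma sum_if_split: "(\<Sum>i<s. (if A i then f i else 0) + (if A i then 0 else f i)) = (\<Sum>i<s. (f i::nat))"
  by (rule sum.cong) auto

lemma CC1:
  fixes m u v :: "nat \<Rightarrow> nat"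
  assumes fail: "\<And>A. \<not> ((\<Sum>i<s. if A i then m i else 0) \<le> R \<and> (\<Sum>i<s. if A i then 0 else m i) \<le> R)"
    and mle: "\<And>i. i<s \<Longrightarrow> m i \<le> max (u i) (v i)"
    and su: "(\<Sum>i<s. u i) = R+1" and sv: "(\<Sum>i<s. v i) \<le> R"
    and k: "k < s" "u k < v k"
  shows "u k = 0"
proof (rule ccontr)
  assume nz: "u k \<noteq> 0"
  define A where "A = (\<lambda>i. u i < v i)"
  have "(\<Sum>i<s. if A i then m i else 0) \<le> (\<Sum>i<s. v i)"
  proof (rule sum_mono)
    fix i assume "i \<in> {..<s}"
    then show "(if A i then m i else 0) \<le> v i" using mle[of i] by (auto simp: A_def max_def)
  qed
  with sv have 1: "(\<Sum>i<s. if A i then m i else 0) \<le> R" by simp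
  have "(\<Sum>i<s. if A i then 0 else m i) \<le> (\<Sum>i<s. if A i then 0 else u i)"
  proof (rule sum_mono)
    fix i assume "i \<in> {..<s}"
    then show "(if A i then 0 else m i) \<le> (if A i then 0 else u i)" using mle[of i] by (auto simp: A_def max_def)
  qed
  moreover have "(\<Sum>i<s. if A i then u i else 0) \<ge> u k"
  proof -
    have "(\<lambda>i. if A i then u i else 0) k \<le> (\<Sum>i<s. if A i then u i else 0)"
      by (rule member_le_sum) (use k in auto)
    then show ?thesis using k by (simp add: A_def)
  qed
  moreover have "(\<Sum>i<s. if A i then u i else 0) + (\<Sum>i<s. if A i then 0 else u i) = R+1"
    using su sum_if_split[where s=s and A=A and f=u] by (simp add: sum.distrib)
  ultimately have "(\<Sum>i<s. if A i then 0 else m i) \<le> R" using nz by linarith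
  with 1 fail show False by blast
qed

lemma CC2:
  fixes m u v :: "nat \<Rightarrow> nat"
  assumes fail: "\<And>A. \<not> ((\<Sum>i<s. if A i then m i else 0) \<le> R \<and> (\<Sum>i<s. if A i then 0 else m i) \<le> R)"
    and mle: "\<And>i. i<s \<Longrightarrow> m i \<le> max (u i) (v i)"
    and su: "(\<Sum>i<s. u i) = R+1" and sv: "(\<Sum>i<s. v i) \<le> R"
    and k: "k < s" "1 \<le> u k"
  shows "R+1 \<le> (\<Sum>i<s. if u i = 0 then m i else 0) + m k" and "m k \<le> u k"
proof -
  have mu: "m i \<le> u i" if "i < s" "u i \<noteq> 0" for i
    proof -
    have "\<not> u i < v i" using CC1[OF fail mle su sv, of i] that by auto
    then show ?thesis using mle[of i] that by (auto simp: max_def)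
  qed
  show mk: "m k \<le> u k" using mu k by simp
  define A where "A = (\<lambda>i. u i = 0 \<or> i = k)"
  have "(\<Sum>i<s. if A i then 0 else m i) \<le> (\<Sum>i<s. if A i then 0 else u i)"
    by (rule sum_mono) (use mu in \<open>auto simp: A_def\<close>)
  moreover have "(\<Sum>i<s. if A i then u i else 0) \<ge> u k"
  proof -
    have "(\<lambda>i. if A i then u i else 0) k \<le> (\<Sum>i<s. if A i then u i else 0)"
      by (rule member_le_sum) (use k in auto)
    then show ?thesis using k by (simp add: A_def)
  qed
  moreover have "(\<Sum>i<s. if A i then u i else 0) + (\<Sum>i<s. if A i then 0 else u i) = R+1"
    using su sum_if_split[where s=s and A=A and f=u] by (simp add: sum.distrib)
  ultimately have "(\<Sum>i<s. if A i then 0 else m i) \<le> R" using k by linarith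
  with fail[of A] have 2: "R+1 \<le> (\<Sum>i<s. if A i then m i else 0)" by linarith
  have "(\<Sum>i<s. if A i then m i else 0) = (\<Sum>i<s. (if u i = 0 then m i else 0) + (if i = k then m i else 0))"
    by (rule sum.cong) (use k in \<open>auto simp: A_def\<close>)
  also have "\<dots> = (\<Sum>i<s. if u i = 0 then m i else 0) + m k"
    using k by (simp add: sum.distrib)
  finally show "R+1 \<le> (\<Sum>i<s. if u i = 0 then m i else 0) + m k" using 2 by simp
qed

lemma CC3:
  fixes m u v :: "nat \<Rightarrow> nat"
  assumes fail: "\<And>A. \<not> ((\<Sum>i<s. if A i then m i else 0) \<le> R \<and> (\<Sum>i<s. if A i then 0 else m i) \<le> R)"
    and mle: "\<And>i. i<s \<Longrightarrow> m i \<le> max (u i) (v i)"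
    and su: "(\<Sum>i<s. u i) = R+1" and sv: "(\<Sum>i<s. v i) \<le> R"
    and k: "k < s" "u k = 1"
    and mr: "\<And>i. i<s \<Longrightarrow> m i \<le> r"
    and zr: "(\<Sum>i<s. if u i = 0 then r else 0) \<le> R"
  shows "\<forall>i<s. u i \<noteq> 0 \<longrightarrow> v i = 0" and "\<forall>i<s. u i = 0 \<longrightarrow> m i = r"
proof -
  have a: "R+1 \<le> (\<Sum>i<s. if u i = 0 then m i else 0) + m k" and b: "m k \<le> u k"
    using CC2[OF fail mle su sv k(1)] k by auto
  have ge: "R \<le> (\<Sum>i<s. if u i = 0 then m i else 0)" using a b k by linarith
  have le: "(\<Sum>i<s. if u i = 0 then m i else 0) \<le> (\<Sum>i<s. if u i = 0 then r else 0)"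
    by (rule sum_mono) (use mr in auto)
  show "\<forall>i<s. u i = 0 \<longrightarrow> m i = r"
  proof (intro allI impI, rule ccontr)
    fix i assume i: "i < s" "u i = 0" "m i \<noteq> r"
    have "(\<Sum>i<s. if u i = 0 then m i else 0) < (\<Sum>i<s. if u i = 0 then r else 0)"
      by (rule sum_strict_mono_ex1) (use mr i in \<open>auto intro!: bexI[of _ i] simp: le_neq_implies_less\<close>)
    with ge zr show False by linarith
  qed
  show "\<forall>i<s. u i \<noteq> 0 \<longrightarrow> v i = 0"
  proof (intro allI impI, rule ccontr)
    fix i assume i: "i < s" "u i \<noteq> 0" "v i \<noteq> 0"
    have mv: "m i \<le> v i" if "i<s" "u i = 0" for i using mle[of i] that by simp
    have "(\<Sum>i<s. if u i = 0 then m i else 0) < (\<Sum>i<s. v i)"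
      by (rule sum_strict_mono_ex1) (use mv i in \<open>auto intro!: bexI[of _ i]\<close>)
    with ge sv show False by linarith
  qed
qed


lemma rw_le_iff: "row_weight r y \<le> k \<longleftrightarrow> (\<forall>j<r. y j \<noteq> 0 \<longrightarrow> j < k)"
proof -
  have fin: "finite (insert 0 {Suc j |j. j < r \<and> y j \<noteq> 0})"
  proof -
    have "{Suc j |j. j < r \<and> y j \<noteq> 0} \<subseteq> {..r}" by auto
    then show ?thesis using finite_subset by blast
  qed
  show ?thesis unfolding row_weight_def using Max_le_iff[OF fin] by auto
qed

lemma rw_le_r: "row_weight r y \<le> r"
  by (simp add: rw_le_iff)

lemma rw_ge: "j < r \<Longrightarrow> y j \<noteq> 0 \<Longrightarrow> Suc j \<le> row_weight r y"
  using rw_le_iff[of r y j] by (meson not_less_eq_eq order_less_irrefl)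

lemma rw_eq0: "row_weight r y = 0 \<longleftrightarrow> (\<forall>j<r. y j = 0)"
  using rw_le_iff[of r y 0] by auto

lemma rw_cong: "(\<And>j. j < r \<Longrightarrow> a j = b j) \<Longrightarrow> row_weight r a = row_weight r b"
  unfolding row_weight_def by (metis (no_types, lifting))

lemma rw_diff: "row_weight r (\<lambda>j. (a j::'a::ab_group_add) - b j) \<le> max (row_weight r a) (row_weight r b)"
proof -
  have "\<forall>j<r. a j - b j \<noteq> 0 \<longrightarrow> j < max (row_weight r a) (row_weight r b)"
  proof (intro allI impI)
    fix j assume j: "j < r" "a j - b j \<noteq> 0"
    then have "a j \<noteq> 0 \<or> b j \<noteq> 0" by auto
    then show "j < max (row_weight r a) (row_weight r b)"
      using rw_ge[OF j(1), of a] rw_ge[OF j(1), of b] by fastforce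
  qed
  then show ?thesis by (simp only: rw_le_iff)
qed

lemma rw_sym: "row_weight r (\<lambda>j. (a j::'a::ab_group_add) - b j) = row_weight r (\<lambda>j. b j - a j)"
  unfolding row_weight_def by (metis (no_types, lifting) eq_iff_diff_eq_0)

lemma rw_unit: "k < r \<Longrightarrow> a \<noteq> 0 \<Longrightarrow> row_weight r (\<lambda>j. if j = k then a else 0) = Suc k"
proof -
  assume k: "k < r" "a \<noteq> 0"
  have "row_weight r (\<lambda>j. if j = k then a else 0) \<le> Suc k" by (simp add: rw_le_iff)
  moreover have "Suc k \<le> row_weight r (\<lambda>j. if j = k then a else 0)" using rw_ge[OF k(1), of "\<lambda>j. if j = k then a else 0"] k by simp
  ultimately show ?thesis by simp
qed

lemma rw_zero: "row_weight r (\<lambda>j. 0) = 0" by (simp add: rw_eq0)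

lemma dist_unfold: "nrt_dist s r x y = (\<Sum>i<s. row_weight r (\<lambda>j. x i j - y i j))"
  unfolding nrt_dist_def nrt_weight_def by (simp add: fun_diff_def)

lemma PL:
  assumes pc: "perfect_code s r R C" and c: "c \<in> C" "c' \<in> C" "c \<noteq> c'"
  shows "\<not> ((\<Sum>i<s. if A i then row_weight r (\<lambda>j. c i j - c' i j) else 0) \<le> R
          \<and> (\<Sum>i<s. if A i then 0 else row_weight r (\<lambda>j. c i j - c' i j)) \<le> R)"
proof
  assume h: "(\<Sum>i<s. if A i then row_weight r (\<lambda>j. c i j - c' i j) else 0) \<le> R
          \<and> (\<Sum>i<s. if A i then 0 else row_weight r (\<lambda>j. c i j - c' i j)) \<le> R"
  define y where "y = (\<lambda>i. if A i then c i else c' i)"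
  have sp: "C \<subseteq> mat_space s r"
    and disj: "nrt_ball s r c R \<inter> nrt_ball s r c' R = {}"
    using pc c unfolding perfect_code_def by auto
  have ysp: "y \<in> mat_space s r" using sp c unfolding mat_space_def y_def by auto
  have "nrt_dist s r y c' = (\<Sum>i<s. if A i then row_weight r (\<lambda>j. c i j - c' i j) else 0)"
    unfolding dist_unfold by (rule sum.cong) (auto simp: y_def rw_zero)
  moreover have "nrt_dist s r y c = (\<Sum>i<s. if A i then 0 else row_weight r (\<lambda>j. c i j - c' i j))"
    unfolding dist_unfold by (rule sum.cong) (auto simp: y_def rw_zero rw_sym)
  ultimately have "y \<in> nrt_ball s r c R \<inter> nrt_ball s r c' R"
    using h ysp unfolding nrt_ball_def by auto
  with disj show False by blast
qed

lemma cover: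
  assumes pc: "perfect_code s r R C" and x: "x \<in> mat_space s r"
  obtains c where "c \<in> C" "nrt_dist s r x c \<le> R"
  using pc x unfolding perfect_code_def nrt_ball_def by blast

lemma Gen:
  assumes pc: "perfect_code s r R C" and c0: "c0 \<in> C" and e: "e \<in> mat_space s r"
    and we: "nrt_weight s r e = R+1"
  obtains c where "c \<in> C" "c \<noteq> c0"
    "\<And>A. \<not> ((\<Sum>i<s. if A i then row_weight r (\<lambda>j. c i j - c0 i j) else 0) \<le> R
          \<and> (\<Sum>i<s. if A i then 0 else row_weight r (\<lambda>j. c i j - c0 i j)) \<le> R)"
    "\<And>i. row_weight r (\<lambda>j. c i j - c0 i j) \<le> max (row_weight r (e i)) (row_weight r (\<lambda>j. c0 i j + e i j - c i j))"
    "(\<Sum>i<s. row_weight r (\<lambda>j. c0 i j + e i j - c i j)) \<le> R"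
proof -
  define x where "x = (\<lambda>i j. c0 i j + e i j)"
  have sp: "C \<subseteq> mat_space s r" using pc unfolding perfect_code_def by auto
  have xsp: "x \<in> mat_space s r" using sp c0 e unfolding mat_space_def x_def by auto
  obtain c where c: "c \<in> C" "nrt_dist s r x c \<le> R" using cover[OF pc xsp] by blast
  have cd: "(\<Sum>i<s. row_weight r (\<lambda>j. c0 i j + e i j - c i j)) \<le> R"
    using c(2) unfolding dist_unfold x_def .
  have "nrt_dist s r x c0 = R+1"
    using we unfolding dist_unfold x_def nrt_weight_def by simp
  then have ne: "c \<noteq> c0" using c(2) by auto
  have mle: "row_weight r (\<lambda>j. c i j - c0 i j) \<le> max (row_weight r (e i)) (row_weight r (\<lambda>j. c0 i j + e i j - c i j))" for i
  proof -
    have "(\<lambda>j. c i j - c0 i j) = (\<lambda>j. e i j - (c0 i j + e i j - c i j))"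
      by (simp add: fun_eq_iff algebra_simps)
    then show ?thesis using rw_diff[of r "e i" "\<lambda>j. c0 i j + e i j - c i j"] by simp
  qed
  show ?thesis
    by (rule that[OF c(1) ne PL[OF pc c(1) c0 ne] mle cd])
qed

lemma sum_lt_min: "(\<Sum>i<s. if i < \<rho> then 1 else 0) = min s (\<rho>::nat)"
  by (induction s) auto

lemma sum_P_r: "(\<Sum>i<(s::nat). if P i then 0 else (r::nat)) = r * card {i. i < s \<and> \<not> P i}"
proof -
  have f: "(\<Sum>i\<in>{i\<in>{..<s}. \<not> P i}. r) = (\<Sum>i<s. if \<not> P i then r else 0)"
    by (rule sum.inter_filter) simp
  have "(\<Sum>i<s. if P i then 0 else r) = (\<Sum>i\<in>{i\<in>{..<s}. \<not> P i}. r)"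
    unfolding f by (rule sum.cong) auto
  also have "{i\<in>{..<s}. \<not> P i} = {i. i < s \<and> \<not> P i}" by auto
  finally show ?thesis by simp
qed

lemma sum_P_1: "(\<Sum>i<(s::nat). if P i then 1 else (0::nat)) = card {i. i < s \<and> P i}"
proof -
  have f: "(\<Sum>i\<in>{i\<in>{..<s}. P i}. (1::nat)) = (\<Sum>i<s. if P i then 1 else 0)"
    by (rule sum.inter_filter) simp
  have "(\<Sum>i<s. if P i then 1 else 0) = (\<Sum>i\<in>{i\<in>{..<s}. P i}. (1::nat))"
    unfolding f ..
  also have "{i\<in>{..<s}. P i} = {i. i < s \<and> P i}" by auto
  finally show ?thesis by simp
qed

lemma card_notP: "card {i. i < (s::nat) \<and> \<not> P i} = s - card {i. i < s \<and> P i}"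
proof -
  have "{i. i < s \<and> \<not> P i} = {..<s} - {i. i < s \<and> P i}" by auto
  moreover have "{i. i < s \<and> P i} \<subseteq> {..<s}" by auto
  ultimately show ?thesis by (simp add: card_Diff_subset)
qed

lemma Case2:
  fixes C :: "(nat \<Rightarrow> nat \<Rightarrow> 'a::field) set"
  assumes pc: "perfect_code s r R C" and c0: "c0 \<in> C" and r: "1 \<le> r"
    and cardP: "card {i. i < s \<and> P i} = R+1" and k: "k < s" "P k"
  obtains c where "c \<in> C" "R \<le> r * (s - (R+1))"
    "r * (s - (R+1)) = R \<Longrightarrow> \<forall>i<s. P i \<longrightarrow> (\<forall>j<r. c i j = c0 i j + (if j = 0 then 1 else 0))"
    "r * (s - (R+1)) = R \<Longrightarrow> \<forall>i<s. \<not> P i \<longrightarrow> row_weight r (\<lambda>j. c i j - c0 i j) = r"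
proof -
  define e where "e = (\<lambda>i (j::nat). if i < s \<and> P i \<and> j = 0 then (1::'a) else 0)"
  have esp: "e \<in> mat_space s r" unfolding mat_space_def e_def using r by auto
  have ue: "row_weight r (e i) = (if i < s \<and> P i then 1 else 0)" for i
  proof (cases "i < s \<and> P i")
    case True
    then have "e i = (\<lambda>j. if j = 0 then 1 else 0)" by (auto simp: e_def fun_eq_iff)
    then show ?thesis using rw_unit[of 0 r "1::'a"] r True by simp
  next
    case False
    then have "e i = (\<lambda>j. 0)" by (auto simp: e_def fun_eq_iff)
    then show ?thesis using False by (auto simp: rw_eq0)
  qed
  have su: "(\<Sum>i<s. row_weight r (e i)) = R+1"
  proof -
    have "(\<Sum>i<s. row_weight r (e i)) = (\<Sum>i<s. if P i then 1 else 0)"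
      by (rule sum.cong) (auto simp: ue)
    then show ?thesis using sum_P_1[where s=s and P=P] cardP by simp
  qed
  then have we: "nrt_weight s r e = R+1" unfolding nrt_weight_def .
  obtain c where c: "c \<in> C" "c \<noteq> c0"
    and fail: "\<And>A. \<not> ((\<Sum>i<s. if A i then row_weight r (\<lambda>j. c i j - c0 i j) else 0) \<le> R
          \<and> (\<Sum>i<s. if A i then 0 else row_weight r (\<lambda>j. c i j - c0 i j)) \<le> R)"
    and mle: "\<And>i. row_weight r (\<lambda>j. c i j - c0 i j) \<le> max (row_weight r (e i)) (row_weight r (\<lambda>j. c0 i j + e i j - c i j))"
    and sv: "(\<Sum>i<s. row_weight r (\<lambda>j. c0 i j + e i j - c i j)) \<le> R"
    using Gen[OF pc c0 esp we] by blast
  have uk: "row_weight r (e k) = 1" using ue k by simp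
  have cc2: "R+1 \<le> (\<Sum>i<s. if row_weight r (e i) = 0 then row_weight r (\<lambda>j. c i j - c0 i j) else 0) + row_weight r (\<lambda>j. c k j - c0 k j)"
    "row_weight r (\<lambda>j. c k j - c0 k j) \<le> row_weight r (e k)"
    using CC2[where m="\<lambda>i. row_weight r (\<lambda>j. c i j - c0 i j)" and u="\<lambda>i. row_weight r (e i)"
        and v="\<lambda>i. row_weight r (\<lambda>j. c0 i j + e i j - c i j)", OF fail mle su sv k(1)] uk by auto
  have zr: "(\<Sum>i<s. if row_weight r (e i) = 0 then r else 0) = r * (s - (R+1))"
  proof -
    have "(\<Sum>i<s. if row_weight r (e i) = 0 then r else 0) = (\<Sum>i<s. if P i then 0 else r)"
      by (rule sum.cong) (auto simp: ue)
    then show ?thesis using sum_P_r[where s=s and P=P and r=r] card_notP[where s=s and P=P] cardP by simp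
  qed
  have "(\<Sum>i<s. if row_weight r (e i) = 0 then row_weight r (\<lambda>j. c i j - c0 i j) else 0)
      \<le> (\<Sum>i<s. if row_weight r (e i) = 0 then r else 0)"
    by (rule sum_mono) (auto simp: rw_le_r)
  then have R: "R \<le> r * (s - (R+1))" using cc2 uk zr by linarith
  have cc3: "(\<forall>i<s. row_weight r (e i) \<noteq> 0 \<longrightarrow> row_weight r (\<lambda>j. c0 i j + e i j - c i j) = 0)
     \<and> (\<forall>i<s. row_weight r (e i) = 0 \<longrightarrow> row_weight r (\<lambda>j. c i j - c0 i j) = r)"
    if eq: "r * (s - (R+1)) = R"
    using CC3[where m="\<lambda>i. row_weight r (\<lambda>j. c i j - c0 i j)" and u="\<lambda>i. row_weight r (e i)"
        and v="\<lambda>i. row_weight r (\<lambda>j. c0 i j + e i j - c i j)" and r=r, OF fail mle su sv k(1) uk rw_le_r]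
      zr eq by auto
  show ?thesis
  proof (rule that[OF c(1) R])
    assume eq: "r * (s - (R+1)) = R"
    show "\<forall>i<s. P i \<longrightarrow> (\<forall>j<r. c i j = c0 i j + (if j = 0 then 1 else 0))"
    proof (intro allI impI)
      fix i j assume i: "i < s" "P i" and j: "j < r"
      have "row_weight r (e i) \<noteq> 0" using ue[of i] i by simp
      then have "row_weight r (\<lambda>j. c0 i j + e i j - c i j) = 0" using cc3[OF eq] i by blast
      then have "c0 i j + e i j - c i j = 0" using j unfolding rw_eq0 by blast
      then have "c0 i j + e i j = c i j" by (simp only: right_minus_eq)
      moreover have "e i j = (if j = 0 then 1 else 0)" using i unfolding e_def by simp
      ultimately show "c i j = c0 i j + (if j = 0 then 1 else 0)" by simp
    qed
  next
    assume eq: "r * (s - (R+1)) = R"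
    show "\<forall>i<s. \<not> P i \<longrightarrow> row_weight r (\<lambda>j. c i j - c0 i j) = r"
    proof (intro allI impI)
      fix i assume i: "i < s" "\<not> P i"
      have "row_weight r (e i) = 0" using ue[of i] i by simp
      then show "row_weight r (\<lambda>j. c i j - c0 i j) = r" using cc3[OF eq] i by blast
    qed
  qed
qed

lemma Case1:
  fixes C :: "(nat \<Rightarrow> nat \<Rightarrow> 'a::field) set"
  assumes pc: "perfect_code s r R C" and c0: "c0 \<in> C" and s2: "2 \<le> s" and R1: "1 \<le> R"
    and sR: "s \<le> R+1" and Rsr: "R+1 \<le> s*r"
  shows False
proof -
  define Q where "Q = (R+1) div s"
  define \<rho> where "\<rho> = (R+1) mod s"
  define u where "u = (\<lambda>i. Q + (if i < \<rho> then 1 else (0::nat)))"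
  have QR: "s * Q + \<rho> = R+1" unfolding Q_def \<rho>_def by simp
  have rho: "\<rho> < s" unfolding \<rho>_def using s2 by simp
  have Q1: "1 \<le> Q"
  proof -
    have "s div s \<le> (R+1) div s" using sR by (rule div_le_mono)
    then show ?thesis using s2 unfolding Q_def by simp
  qed
  have QleR: "Q \<le> R"
  proof -
    have "2 * Q \<le> s * Q" using s2 by simp
    then show ?thesis using QR R1 by linarith
  qed
  have ur: "u i \<le> r" for i
  proof (cases "\<rho> = 0")
    case True
    then have "s * Q \<le> s * r" using QR Rsr by simp
    then have "Q \<le> r" using s2 by simp
    then show ?thesis using True by (simp add: u_def)
  next
    case False
    then have "s * Q < s * r" using QR Rsr by linarith
    then have "Q < r" by simp
    then show ?thesis by (simp add: u_def)
  qed
  have u1: "1 \<le> u i" for i using Q1 by (simp add: u_def)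
  define e where "e = (\<lambda>i (j::nat). if i < s \<and> j = u i - 1 then (1::'a) else 0)"
  have esp: "e \<in> mat_space s r"
    unfolding mat_space_def e_def using ur u1 by (auto simp: le_diff_conv2) (metis Suc_le_eq Suc_pred' less_le_trans u1 ur not_le)
  have ue: "row_weight r (e i) = u i" if "i < s" for i
  proof -
    have "e i = (\<lambda>j. if j = u i - 1 then 1 else 0)" using that by (auto simp: e_def fun_eq_iff)
    moreover have "u i - 1 < r" using ur[of i] u1[of i] by linarith
    ultimately have "row_weight r (e i) = Suc (u i - 1)" using rw_unit[of "u i - 1" r "1::'a"] by simp
    then show ?thesis using u1[of i] by simp
  qed
  have su: "(\<Sum>i<s. row_weight r (e i)) = R+1"
  proof -
    have "(\<Sum>i<s. row_weight r (e i)) = (\<Sum>i<s. Q + (if i < \<rho> then 1 else 0))"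
      by (rule sum.cong) (auto simp: ue u_def)
    also have "\<dots> = s * Q + min s \<rho>" by (simp add: sum.distrib sum_lt_min)
    finally show ?thesis using QR rho by simp
  qed
  then have we: "nrt_weight s r e = R+1" unfolding nrt_weight_def .
  obtain c where c: "c \<in> C" "c \<noteq> c0"
    and fail: "\<And>A. \<not> ((\<Sum>i<s. if A i then row_weight r (\<lambda>j. c i j - c0 i j) else 0) \<le> R
          \<and> (\<Sum>i<s. if A i then 0 else row_weight r (\<lambda>j. c i j - c0 i j)) \<le> R)"
    and mle: "\<And>i. row_weight r (\<lambda>j. c i j - c0 i j) \<le> max (row_weight r (e i)) (row_weight r (\<lambda>j. c0 i j + e i j - c i j))"
    and sv: "(\<Sum>i<s. row_weight r (\<lambda>j. c0 i j + e i j - c i j)) \<le> R"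
    using Gen[OF pc c0 esp we] by blast
  define k where "k = s - 1"
  have k: "k < s" using s2 unfolding k_def by simp
  have uk: "row_weight r (e k) = Q" using ue[OF k] rho unfolding u_def k_def by simp
  have cc2: "R+1 \<le> (\<Sum>i<s. if row_weight r (e i) = 0 then row_weight r (\<lambda>j. c i j - c0 i j) else 0) + row_weight r (\<lambda>j. c k j - c0 k j)"
    "row_weight r (\<lambda>j. c k j - c0 k j) \<le> row_weight r (e k)"
    using CC2[where m="\<lambda>i. row_weight r (\<lambda>j. c i j - c0 i j)" and u="\<lambda>i. row_weight r (e i)"
        and v="\<lambda>i. row_weight r (\<lambda>j. c0 i j + e i j - c i j)", OF fail mle su sv k] uk Q1 by auto
  have "(\<Sum>i<s. if row_weight r (e i) = 0 then row_weight r (\<lambda>j. c i j - c0 i j) else 0) = 0"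
  proof (rule sum.neutral, intro ballI)
    fix i assume "i \<in> {..<s}"
    then have "row_weight r (e i) \<noteq> 0" using ue[of i] u1[of i] by simp
    then show "(if row_weight r (e i) = 0 then row_weight r (\<lambda>j. c i j - c0 i j) else 0) = 0" by simp
  qed
  then show False using cc2 uk QleR by linarith
qed

theorem mainTheorem10:
  fixes C :: "(nat \<Rightarrow> nat \<Rightarrow> 'a::{field,finite}) set"
    and s r R :: nat
  assumes "s \<ge> 2" and "r \<ge> 2" and "R \<ge> 1"
    and "perfect_code s r R C"
    and "nontrivial_code s r C"
  shows "(R + 1) * (r + 1) \<le> s * r"
proof (rule ccontr)
  assume neg: "\<not> (R + 1) * (r + 1) \<le> s * r"
  note s2 = assms(1) and r2 = assms(2) and R1 = assms(3) and pc = assms(4)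
  have sp: "C \<subseteq> mat_space s r"
    using pc unfolding perfect_code_def by (elim conjE)
  have disj0: "\<forall>c\<in>C. \<forall>c'\<in>C. c \<noteq> c' \<longrightarrow> nrt_ball s r c R \<inter> nrt_ball s r c' R = {}"
    using pc unfolding perfect_code_def by (elim conjE)
  have disj: "\<And>c c'. c \<in> C \<Longrightarrow> c' \<in> C \<Longrightarrow> c \<noteq> c' \<Longrightarrow> nrt_ball s r c R \<inter> nrt_ball s r c' R = {}"
    using disj0 by blast
  have cC: "1 < card C" using assms(5) unfolding nontrivial_code_def by (elim conjE)
  have finC: "finite C"
  proof (rule ccontr)
    assume "infinite C"
    then have "card C = 0" by (rule card.infinite)
    with cC show False by linarith
  qed
  obtain c0 c1 where c01: "c0 \<in> C" "c1 \<in> C" "c0 \<noteq> c1"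
  proof -
    have "\<not> card C \<le> Suc 0" using cC by linarith
    then have "\<exists>a\<in>C. \<exists>b\<in>C. a \<noteq> b" using card_le_Suc0_iff_eq[OF finC] by blast
    then show ?thesis using that by blast
  qed
  have Rsr: "R + 1 \<le> s * r"
  proof (rule ccontr)
    assume "\<not> R + 1 \<le> s * r"
    then have sR: "s * r \<le> R" by simp
    have "nrt_dist s r c0 c1 \<le> s * r"
    proof -
      have "nrt_dist s r c0 c1 \<le> (\<Sum>i<s. r)" unfolding dist_unfold by (rule sum_mono) (simp add: rw_le_r)
      then show ?thesis by simp
    qed
    moreover have "nrt_dist s r c0 c0 = 0" unfolding dist_unfold by (simp add: rw_eq0)
    ultimately have "c0 \<in> nrt_ball s r c0 R \<inter> nrt_ball s r c1 R"
      using sR sp c01 unfolding nrt_ball_def by auto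
    with disj[OF c01] show False by blast
  qed
  show False
  proof (cases "s \<le> R + 1")
    case True
    then show False using Case1[OF pc c01(1) s2 R1 True Rsr] by simp
  next
    case False
    define t where "t = s - (R+1)"
    have t: "s = t + (R+1)" "1 \<le> t" using False unfolding t_def by simp_all
    have st: "s - (R+1) = t" using t by simp
    have tlt: "r * t < R + 1"
    proof -
      have "s * r = r * t + (R+1) * r" using t by (simp add: algebra_simps)
      moreover have "(R + 1) * (r + 1) = (R+1) * r + (R+1)" by (simp add: algebra_simps)
      ultimately show ?thesis using neg by linarith
    qed
    have card1: "card {i. i < s \<and> i \<le> R} = R+1"
    proof -
      have "{i. i < s \<and> i \<le> R} = {..R}" using t by auto
      then show ?thesis by simp
    qed
    have card2: "card {i. i < s \<and> 1 \<le> i \<and> i \<le> R+1} = R+1"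
    proof -
      have "{i. i < s \<and> 1 \<le> i \<and> i \<le> R+1} = {1..R+1}" using t by auto
      then show ?thesis by simp
    qed
    have r1: "1 \<le> r" using r2 by simp
    have s0: "0 < s" using s2 by simp
    have s1: "1 < s" using s2 by simp
    obtain c where c: "c \<in> C" "R \<le> r * (s - (R+1))"
      "r * (s - (R+1)) = R \<Longrightarrow> \<forall>i<s. i \<le> R \<longrightarrow> (\<forall>j<r. c i j = c0 i j + (if j = 0 then 1 else 0))"
      "r * (s - (R+1)) = R \<Longrightarrow> \<forall>i<s. \<not> i \<le> R \<longrightarrow> row_weight r (\<lambda>j. c i j - c0 i j) = r"
      by (rule Case2[where P="\<lambda>i. i \<le> R" and k=0, OF pc c01(1) r1 card1 s0]) simp_all
    have eq: "r * (s - (R+1)) = R" using c(2) tlt st by simp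
    obtain c' where c': "c' \<in> C"
      "r * (s - (R+1)) = R \<Longrightarrow> \<forall>i<s. (1 \<le> i \<and> i \<le> R+1) \<longrightarrow> (\<forall>j<r. c' i j = c0 i j + (if j = 0 then 1 else 0))"
      "r * (s - (R+1)) = R \<Longrightarrow> \<forall>i<s. \<not> (1 \<le> i \<and> i \<le> R+1) \<longrightarrow> row_weight r (\<lambda>j. c' i j - c0 i j) = r"
      by (rule Case2[where P="\<lambda>i. 1 \<le> i \<and> i \<le> R+1" and k=1, OF pc c01(1) r1 card2 s1]) simp_all
    note cs1 = c(3)[OF eq] and cs2 = c'(2)[OF eq] and cw2 = c'(3)[OF eq]
    have "c \<noteq> c'"
    proof
      assume "c = c'"
      have "row_weight r (\<lambda>j. c 0 j - c0 0 j) = row_weight r (\<lambda>j. if j = 0 then (1::'a) else 0)"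
        by (rule rw_cong) (use cs1 s0 in auto)
      also have "\<dots> = 1" using rw_unit[of 0 r "1::'a"] r1 by simp
      finally have "row_weight r (\<lambda>j. c 0 j - c0 0 j) = 1" .
      moreover have "row_weight r (\<lambda>j. c' 0 j - c0 0 j) = r" using cw2 s0 by simp
      ultimately show False using \<open>c = c'\<close> r2 by simp
    qed
    have p1: "(\<Sum>i<s. if i = 0 then row_weight r (\<lambda>j. c i j - c' i j) else 0) \<le> R"
    proof -
      have "(\<Sum>i<s. if i = 0 then row_weight r (\<lambda>j. c i j - c' i j) else 0) = row_weight r (\<lambda>j. c 0 j - c' 0 j)"
        using s0 by (simp add: sum.delta)
      also have "\<dots> \<le> r" by (rule rw_le_r)
      also have "r \<le> R" using eq st t(2) by (metis mult_le_mono2 nat_mult_1_right)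
      finally show ?thesis .
    qed
    have p2: "(\<Sum>i<s. if i = 0 then 0 else row_weight r (\<lambda>j. c i j - c' i j)) \<le> R"
    proof -
      have "(\<Sum>i<s. if i = 0 then 0 else row_weight r (\<lambda>j. c i j - c' i j)) \<le> (\<Sum>i<s. if i \<le> R then 0 else r)"
      proof (rule sum_mono)
        fix i assume i: "i \<in> {..<s}"
        show "(if i = 0 then 0 else row_weight r (\<lambda>j. c i j - c' i j)) \<le> (if i \<le> R then 0 else r)"
        proof (cases "i = 0")
          case False
          show ?thesis
          proof (cases "i \<le> R")
            case True
            have "row_weight r (\<lambda>j. c i j - c' i j) = 0" unfolding rw_eq0
              using cs1 cs2 i True False by auto
            then show ?thesis by simp
          qed (simp add: rw_le_r)
        qed simp
      qed
      also have "\<dots> = r * (s - card {i. i < s \<and> i \<le> R})"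
        using sum_P_r[where s=s and P="\<lambda>i. i \<le> R" and r=r] card_notP[where s=s and P="\<lambda>i. i \<le> R"] by simp
      also have "\<dots> = R" using card1 eq by simp
      finally show ?thesis .
    qed
    show False using PL[OF pc c(1) c'(1) \<open>c \<noteq> c'\<close>, of "\<lambda>i. i = 0"] p1 p2 by blast
  qed
qed

end
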